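(* Consider the protocol $P_{RL}$ with parameter $N$ on a directed ring of size $n$ with $2\le n\le N$, under the uniformly random scheduler. Let $C$ be a configuration in which no agent is a leader. Then the expected number of steps until the execution from $C$ reaches a configuration containing a leader is $O(nN)$ (with a constant independent of $n$, $N$ and $C$).
   Context: Model. A population is a directed ring of $n\ge 2$ anonymous agents $u_0,\dots,u_{n-1}$ (indices modulo $n$) with arcs $e_i=(u_i,u_{i+1})$. A configuration assigns a state to each agent. In an interaction on arc $e_i$, initiator $u_i$ and responder $u_{i+1}$ update their states by the transition function and all other agents keep their states. The uniformly random scheduler chooses at each step $t=0,1,2,\dots$ an arc uniformly at random among the $n$ arcs, independently; the execution from $C_0$ is the resulting sequence of configurations $C_0,C_1,\dots$. Protocol $P_{RL}$ (parameter $N$). Each agent has variables $\mathit{leader}\in\{0,1\}$, $\mathit{bullet}\in\{0,1,2\}$, $\mathit{shield}\in\{0,1\}$, $\mathit{signal}\in\{0,1\}$, $\mathit{dist}\in\{0,\dots,N\}$; it is a leader if $\mathit{leader}=1$. In an interaction with initiator $l$ and responder $r$ the following are executed in order: 1. If $l.\mathit{leader}=1$ then $l.\mathit{dist}\gets 0$. 2. If $r.\mathit{leader}=1$ then $r.\mathit{dist}\gets 0$; else if $r.\mathit{bullet}=0$ then $r.\mathit{dist}\gets\min(l.\mathit{dist}+1,N)$. 3. If $r.\mathit{dist}=N$ then $r.\mathit{leader}\gets1$, $r.\mathit{bullet}\gets2$, $r.\mathit{shield}\gets1$, $r.\mathit{signal}\gets0$, $r.\mathit{dist}\gets0$. 4.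 If $l.\mathit{leader}=1$ and $l.\mathit{signal}=1$ then $l.\mathit{bullet}\gets2$, $l.\mathit{shield}\gets1$, $l.\mathit{signal}\gets0$. 5. If $r.\mathit{leader}=1$ and $r.\mathit{signal}=1$ then $r.\mathit{bullet}\gets1$, $r.\mathit{shield}\gets0$, $r.\mathit{signal}\gets0$. 6. If $l.\mathit{bullet}>0$ and $r.\mathit{leader}=1$: set $r.\mathit{leader}\gets0$ if ($l.\mathit{bullet}=2$ and $r.\mathit{shield}=0$); then $l.\mathit{bullet}\gets0$. Else, if $l.\mathit{bullet}>0$ and $r.\mathit{leader}=0$: if $r.\mathit{bullet}=0$ then $r.\mathit{bullet}\gets l.\mathit{bullet}$; then $l.\mathit{bullet}\gets0$ and $r.\mathit{signal}\gets0$. 7. $l.\mathit{signal}\gets\max(l.\mathit{signal},r.\mathit{signal},r.\mathit{leader})$. *)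

theory Defs
  imports "HOL-Probability.Probability"
begin

text \<open>Agent state of protocol P_RL. Boolean fields encode the 0/1 variables
  (True = 1); bullet ranges over {0,1,2}, dist over {0..N}.\<close>
record agent_state =
  leader :: bool
  bullet :: nat
  shield :: bool
  signal :: bool
  dist   :: nat

definition valid_state :: "nat \<Rightarrow> agent_state \<Rightarrow> bool" where
  "valid_state N s \<longleftrightarrow> bullet s \<le> 2 \<and> dist s \<le> N"

definition delta :: "nat \<Rightarrow> agent_state \<Rightarrow> agent_state \<Rightarrow> agent_state \<times> agent_state" where
  "delta N l0 r0 = (
     let
       \<comment> \<open>1\<close>
       l1 = (if leader l0 then l0\<lparr>dist := 0\<rparr> else l0);
       \<comment> \<open>2\<close>
       r2 = (if leader r0 then r0\<lparr>dist := 0\<rparr>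
             else if bullet r0 = 0 then r0\<lparr>dist := min (dist l1 + 1) N\<rparr> else r0);
       \<comment> \<open>3\<close>
       r3 = (if dist r2 = N then r2\<lparr>leader := True, bullet := 2, shield := True,
                                   signal := False, dist := 0\<rparr> else r2);
       \<comment> \<open>4\<close>
       l4 = (if leader l1 \<and> signal l1 then l1\<lparr>bullet := 2, shield := True, signal := False\<rparr>
             else l1);
       \<comment> \<open>5\<close>
       r5 = (if leader r3 \<and> signal r3 then r3\<lparr>bullet := 1, shield := False, signal := False\<rparr>
             else r3);
       \<comment> \<open>6\<close>
       (l6, r6) =
         (if bullet l4 > 0 \<and> leader r5 then
            (l4\<lparr>bullet := 0\<rparr>,
             (if bullet l4 = 2 \<and> \<not> shield r5 then r5\<lparr>leader := False\<rparr> else r5))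
          else if bullet l4 > 0 \<and> \<not> leader r5 then
            (l4\<lparr>bullet := 0\<rparr>,
             (if bullet r5 = 0 then r5\<lparr>bullet := bullet l4\<rparr> else r5)\<lparr>signal := False\<rparr>)
          else (l4, r5));
       \<comment> \<open>7\<close>
       l7 = l6\<lparr>signal := (signal l6 \<or> signal r6 \<or> leader r6)\<rparr>
     in (l7, r6))"

text \<open>Configurations of a ring of size n: agents u_0..u_{n-1} are C 0 .. C (n-1).
  An interaction on arc e_i = (u_i, u_{i+1 mod n}).\<close>
type_synonym config = "nat \<Rightarrow> agent_state"

definition interact :: "nat \<Rightarrow> nat \<Rightarrow> config \<Rightarrow> nat \<Rightarrow> config" where
  "interact N n C i =
     (let (l', r') = delta N (C i) (C (Suc i mod n))
      in C(i := l', Suc i mod n := r'))"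

primrec exec :: "nat \<Rightarrow> nat \<Rightarrow> config \<Rightarrow> nat stream \<Rightarrow> nat \<Rightarrow> config" where
  "exec N n C \<omega> 0 = C"
| "exec N n C \<omega> (Suc t) = interact N n (exec N n C \<omega> t) (\<omega> !! t)"

definition has_leader :: "nat \<Rightarrow> config \<Rightarrow> bool" where
  "has_leader n C \<longleftrightarrow> (\<exists>i<n. leader (C i))"

definition scheduler :: "nat \<Rightarrow> nat stream measure" where
  "scheduler n = stream_space (measure_pmf (pmf_of_set {..<n}))"

definition hit_time :: "nat \<Rightarrow> nat \<Rightarrow> config \<Rightarrow> nat stream \<Rightarrow> enat" where
  "hit_time N n C \<omega> =
     (if \<exists>t. has_leader n (exec N n C \<omega> t)
      then enat (LEAST t. has_leader n (exec N n C \<omega> t)) else \<infinity>)"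

definition expected_hit_time :: "nat \<Rightarrow> nat \<Rightarrow> config \<Rightarrow> ennreal" where
  "expected_hit_time N n C = (\<integral>\<^sup>+ \<omega>. ennreal_of_enat (hit_time N n C \<omega>) \<partial>scheduler n)"

end

theory Submission
  imports Defs
begin


fun hk :: "nat \<Rightarrow> nat \<Rightarrow> nat \<Rightarrow> config \<Rightarrow> nat stream \<Rightarrow> ennreal" where
  "hk N n 0 C \<omega> = 0"
| "hk N n (Suc k) C \<omega> = (if has_leader n C then 0 else 1 + hk N n k (interact N n C (shd \<omega>)) (stl \<omega>))"

lemma exec_Cons: "exec N n C (x ## \<omega>) (Suc t) = exec N n (interact N n C x) \<omega> t"
  by (induction t) auto

lemma hit_time_Cons:
  "hit_time N n C (x ## \<omega>) = (if has_leader n C then 0 else eSuc (hit_time N n (interact N n C x) \<omega>))"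
proof (cases "has_leader n C")
  case True
  then show ?thesis unfolding hit_time_def
    by (metis (mono_tags, lifting) Least_eq_0 exec.simps(1) zero_enat_def)
next
  case False
  have ex: "(\<exists>t. has_leader n (exec N n C (x ## \<omega>) t)) = (\<exists>t. has_leader n (exec N n (interact N n C x) \<omega> t))"
    using False by (metis exec.simps(1) exec_Cons not0_implies_Suc)
  show ?thesis
  proof (cases "\<exists>t. has_leader n (exec N n (interact N n C x) \<omega> t)")
    case True
    then obtain t where t: "has_leader n (exec N n (interact N n C x) \<omega> t)" by blast
    have "(LEAST t. has_leader n (exec N n C (x ## \<omega>) t)) = Suc (LEAST t. has_leader n (exec N n (interact N n C x) \<omega> t))"
      by (rule Least_Suc2[where n="Suc t" and m=t]) (use t False exec_Cons in auto)
    then show ?thesis using True ex False unfolding hit_time_def by (simp add: eSuc_enat)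
  next
    case f2: False
    then show ?thesis using ex False unfolding hit_time_def by simp
  qed
qed

lemma min_Suc_eSuc: "min (enat (Suc k)) (eSuc H) = eSuc (min (enat k) H)"
  by (cases H) (auto simp: eSuc_enat)

lemma hk_eq: "hk N n k C \<omega> = ennreal_of_enat (min (enat k) (hit_time N n C \<omega>))"
proof (induction k arbitrary: C \<omega>)
  case 0
  then show ?case by (simp add: zero_enat_def[symmetric])
next
  case (Suc k)
  obtain x \<omega>' where w: "\<omega> = x ## \<omega>'" by (cases \<omega>)
  show ?case
    using Suc[of "interact N n C x" \<omega>'] unfolding w
    by (simp add: hit_time_Cons min_Suc_eSuc)
qed

lemma SUP_min_enat: "(SUP k. min (enat k) x) = x"
proof (cases x)
  case (enat m)
  show ?thesis
  proof (rule antisym)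
    show "(SUP k. min (enat k) x) \<le> x" by (rule SUP_least) simp
    show "x \<le> (SUP k. min (enat k) x)" using enat by (intro SUP_upper2[where i=m]) auto
  qed
next
  case infinity
  have le: "enat k \<le> (SUP k. min (enat k) x)" for k
    using infinity by (intro SUP_upper2[where i=k]) auto
  show ?thesis
  proof (cases "(SUP k. min (enat k) x)")
    case (enat m)
    then show ?thesis using le[of "Suc m"] by simp
  qed (use infinity in simp)
qed

lemma hk_SUP: "(SUP k. hk N n k C \<omega>) = ennreal_of_enat (hit_time N n C \<omega>)"
  unfolding hk_eq using ennreal_of_enat_Sup[of "range (\<lambda>k. min (enat k) (hit_time N n C \<omega>))"]
  by (simp add: image_image SUP_min_enat)

lemma hk_mono: "hk N n k C \<omega> \<le> hk N n (Suc k) C \<omega>"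
  unfolding hk_eq ennreal_of_enat_le_iff by (simp add: min.coboundedI1 min.coboundedI2 le_SucI)

lemma hk_meas: "hk N n k C \<in> borel_measurable (stream_space (measure_pmf p))"
proof (induction k arbitrary: C)
  case 0
  then show ?case by simp
next
  case (Suc k)
  have sh: "shd \<in> measurable (stream_space (measure_pmf p)) (count_space UNIV)"
    using measurable_shd[of "measure_pmf p"] by (simp add: measurable_cong_sets)
  have "(\<lambda>\<omega>. (\<lambda>x \<omega>. if has_leader n C then 0 else 1 + hk N n k (interact N n C x) (stl \<omega>)) (shd \<omega>) \<omega>)
     \<in> borel_measurable (stream_space (measure_pmf p))"
    apply (rule measurable_compose_countable[OF _ sh])
    using Suc by measurable
  then show ?case by simp
qed

lemma hk_int_Suc:
  assumes n: "n > 0"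
  shows "(\<integral>\<^sup>+\<omega>. hk N n (Suc k) C \<omega> \<partial>scheduler n) =
    (if has_leader n C then 0 else
       1 + (\<Sum>i<n. (\<integral>\<^sup>+\<omega>. hk N n k (interact N n C i) \<omega> \<partial>scheduler n) * ennreal (1 / real n)))"
proof (cases "has_leader n C")
  case True
  then show ?thesis by simp
next
  case False
  define p where "p = pmf_of_set {..<n::nat}"

  have sp: "set_pmf p = {..<n}" using n unfolding p_def by (simp add: set_pmf_of_set lessThan_empty_iff)
  have S: "scheduler n = stream_space (measure_pmf p)" unfolding scheduler_def p_def ..
  have m: "(\<lambda>\<omega>. hk N n (Suc k) C \<omega>) \<in> borel_measurable (stream_space (measure_pmf p))"
    by (rule hk_meas)
  have "(\<integral>\<^sup>+\<omega>. hk N n (Suc k) C \<omega> \<partial>scheduler n)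
      = (\<integral>\<^sup>+x. (\<integral>\<^sup>+\<omega>. hk N n (Suc k) C (x ## \<omega>) \<partial>stream_space (measure_pmf p)) \<partial>measure_pmf p)"
    unfolding S by (rule prob_space.nn_integral_stream_space[OF prob_space_measure_pmf m])
  also have "\<dots> = (\<integral>\<^sup>+x. 1 + (\<integral>\<^sup>+\<omega>. hk N n k (interact N n C x) \<omega> \<partial>stream_space (measure_pmf p)) \<partial>measure_pmf p)"
  proof (rule nn_integral_cong)
    fix x
    have "(\<integral>\<^sup>+\<omega>. hk N n (Suc k) C (x ## \<omega>) \<partial>stream_space (measure_pmf p))
       = (\<integral>\<^sup>+\<omega>. 1 + hk N n k (interact N n C x) \<omega> \<partial>stream_space (measure_pmf p))"
      using False by simp
    also have "\<dots> = (\<integral>\<^sup>+\<omega>. 1 \<partial>stream_space (measure_pmf p)) + (\<integral>\<^sup>+\<omega>. hk N n k (interact N n C x) \<omega> \<partial>stream_space (measure_pmf p))"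
      by (rule nn_integral_add) (auto intro: hk_meas)
    also have "(\<integral>\<^sup>+\<omega>. 1 \<partial>stream_space (measure_pmf p)) = 1"
    proof -
      interpret S: prob_space "stream_space (measure_pmf p)" by (rule prob_space.prob_space_stream_space[OF prob_space_measure_pmf])
      show ?thesis by (simp add: S.emeasure_space_1)
    qed
    finally show "(\<integral>\<^sup>+\<omega>. hk N n (Suc k) C (x ## \<omega>) \<partial>stream_space (measure_pmf p))
       = 1 + (\<integral>\<^sup>+\<omega>. hk N n k (interact N n C x) \<omega> \<partial>stream_space (measure_pmf p))" .
  qed
  also have "\<dots> = (\<Sum>i\<in>set_pmf p. (1 + (\<integral>\<^sup>+\<omega>. hk N n k (interact N n C i) \<omega> \<partial>stream_space (measure_pmf p))) * pmf p i)"
    by (rule nn_integral_measure_pmf_finite) (auto simp: sp)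
  also have "\<dots> = (\<Sum>i<n. (1 + (\<integral>\<^sup>+\<omega>. hk N n k (interact N n C i) \<omega> \<partial>scheduler n)) * ennreal (1 / real n))"
    unfolding sp S[symmetric] by (intro sum.cong refl) (simp add: p_def n lessThan_empty_iff)
  also have "\<dots> = (\<Sum>i<n. ennreal (1 / real n)) + (\<Sum>i<n. (\<integral>\<^sup>+\<omega>. hk N n k (interact N n C i) \<omega> \<partial>scheduler n) * ennreal (1 / real n))"
    by (simp add: distrib_right sum.distrib)
  also have "(\<Sum>i<n. ennreal (1 / real n)) = 1"
  proof -
    have "(\<Sum>i<n. ennreal (1 / real n)) = ennreal (real n) * ennreal (1 / real n)"
      by (simp add: ennreal_of_nat_eq_real_of_nat)
    also have "\<dots> = ennreal (real n * (1 / real n))"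
      by (rule ennreal_mult[symmetric]) auto
    also have "\<dots> = 1" using n by simp
    finally show ?thesis .
  qed
  finally show ?thesis using False by simp
qed



definition dnew :: "nat \<Rightarrow> agent_state \<Rightarrow> agent_state \<Rightarrow> nat" where
  "dnew N l r = (if bullet r = 0 then min (Suc (dist l)) N else dist r)"

lemma delta_lead:
  assumes "\<not> leader l" "\<not> leader r" "dnew N l r = N"
  shows "leader (snd (delta N l r))"
  using assms unfolding delta_def dnew_def Let_def by (auto split: if_splits prod.splits)

lemma delta_nolead:
  assumes "\<not> leader l" "\<not> leader r" "dnew N l r \<noteq> N"
  shows "\<not> leader (fst (delta N l r)) \<and> dist (fst (delta N l r)) = dist l \<and>
         bullet (fst (delta N l r)) = (if 0 < bullet l then 0 else bullet l) \<and>
         \<not> leader (snd (delta N l r)) \<and> dist (snd (delta N l r)) = dnew N l r \<and>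
         bullet (snd (delta N l r)) = (if 0 < bullet l \<and> bullet r = 0 then bullet l else bullet r)"
  using assms unfolding delta_def dnew_def Let_def by (auto split: if_splits prod.splits)

lemma delta_dist:
  assumes "dist l \<le> N" "dist r \<le> N"
  shows "dist (fst (delta N l r)) \<le> N \<and> dist (snd (delta N l r)) \<le> N"
  using assms unfolding delta_def Let_def by (auto split: if_splits prod.splits)

lemma interact_eq: "interact N n C i = C(i := fst (delta N (C i) (C (Suc i mod n))),
   Suc i mod n := snd (delta N (C i) (C (Suc i mod n))))"
  by (simp add: interact_def split: prod.split)

lemma sum_delta_real: "i < (n::nat) \<Longrightarrow> (\<Sum>k<n. if k = i then x else 0) = (x::real)"
  by (simp add: sum.delta')

lemma sum_upd2:
  fixes g :: "agent_state \<Rightarrow> real" and C :: config and n :: nat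
  assumes "i < n" "j < n" "i \<noteq> j"
  shows "(\<Sum>k<n. g ((C(i := a, j := b)) k)) = (\<Sum>k<n. g (C k)) - g (C i) - g (C j) + g a + g b"
proof -
  have "(\<Sum>k<n. g ((C(i := a, j := b)) k)) =
    (\<Sum>k<n. g (C k) + ((if k = i then g a - g (C i) else 0) + (if k = j then g b - g (C j) else 0)))"
    by (intro sum.cong) (use assms in auto)
  also have "\<dots> = (\<Sum>k<n. g (C k)) - g (C i) - g (C j) + g a + g b"
    using assms by (simp add: sum.distrib sum_delta_real)
  finally show ?thesis .
qed

lemma sum_rot:
  fixes f :: "nat \<Rightarrow> real"
  assumes "n > 0"
  shows "(\<Sum>i<n. f (Suc i mod n)) = (\<Sum>i<n. f i)"
proof -
  obtain m where m: "n = Suc m" using assms by (cases n) auto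
  have "(\<Sum>i<Suc m. f (Suc i mod Suc m)) = (\<Sum>i<m. f (Suc i)) + f 0"
    by (simp add: sum.lessThan_Suc)
  also have "\<dots> = (\<Sum>i<Suc m. f i)"
    by (subst sum.lessThan_Suc_shift) simp
  finally show ?thesis using m by simp
qed



definition psi :: "nat \<Rightarrow> agent_state \<Rightarrow> real" where
  "psi N s = (if bullet s > 0 then 2 ^ (N - dist s) else 0)"

definition Phi :: "nat \<Rightarrow> nat \<Rightarrow> config \<Rightarrow> real" where
  "Phi N n C = (if has_leader n C then 0
     else if (\<forall>j<n. bullet (C j) = 0) then real n * (real N + 1) - (\<Sum>j<n. real (dist (C j)))
     else 2 * real n * (1 + ln (\<Sum>j<n. psi N (C j))))"

definition distok :: "nat \<Rightarrow> nat \<Rightarrow> config \<Rightarrow> bool" where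
  "distok N n C \<longleftrightarrow> (\<forall>j<n. dist (C j) \<le> N)"

lemma psi_nonneg: "0 \<le> psi N s"
  by (simp add: psi_def)

lemma Psi_ge1:
  fixes C :: config and n :: nat
  assumes "k < n" "bullet (C k) > 0"
  shows "1 \<le> (\<Sum>j<n. psi N (C j))"
proof -
  have "1 \<le> psi N (C k)" using assms by (simp add: psi_def)
  also have "\<dots> \<le> (\<Sum>j<n. psi N (C j))"
    by (rule member_le_sum) (use assms psi_nonneg in auto)
  finally show ?thesis .
qed

lemma sumdist_le: "distok N n C \<Longrightarrow> (\<Sum>j<n. real (dist (C j))) \<le> real n * real N"
proof -
  assume "distok N n C"
  then have "(\<Sum>j<n. real (dist (C j))) \<le> (\<Sum>j<n. real N)"
    by (intro sum_mono) (auto simp: distok_def)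
  then show ?thesis by simp
qed

lemma Phi_nonneg: "distok N n C \<Longrightarrow> 0 \<le> Phi N n C"
proof -
  assume d: "distok N n C"
  show ?thesis
  proof (cases "has_leader n C \<or> (\<forall>j<n. bullet (C j) = 0)")
    case True
    then show ?thesis using sumdist_le[OF d] by (auto simp: Phi_def algebra_simps)
  next
    case False
    then obtain k where "k < n" "bullet (C k) > 0" by auto
    then have "1 \<le> (\<Sum>j<n. psi N (C j))" by (rule Psi_ge1)
    moreover have "Phi N n C = 2 * real n * (1 + ln (\<Sum>j<n. psi N (C j)))"
      unfolding Phi_def using False by auto
    ultimately show ?thesis by simp
  qed
qed

lemma distok_interact: "distok N n C \<Longrightarrow> i < n \<Longrightarrow> distok N n (interact N n C i)"
  unfolding distok_def interact_eq
  using delta_dist[of "C i" N "C (Suc i mod n)"] by auto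

lemma Phi_bound:
  assumes n: "2 \<le> n" and nN: "n \<le> N" and d: "distok N n C"
  shows "Phi N n C \<le> 6 * real n * real N"
proof -
  have N1: "1 \<le> real N" using n nN by simp
  have n0: "0 < real n" using n by simp
  show ?thesis
  proof (cases "has_leader n C")
    case True
    then show ?thesis using n0 N1 by (simp add: Phi_def)
  next
    case nl: False
    show ?thesis
    proof (cases "\<forall>j<n. bullet (C j) = 0")
      case True
      have "real n * (real N + 1) \<le> 6 * real n * real N" using n0 N1 by (simp add: algebra_simps)
      moreover have "0 \<le> (\<Sum>j<n. real (dist (C j)))" by (simp add: sum_nonneg)
      ultimately show ?thesis using True nl by (simp add: Phi_def)
    next
      case False
      then obtain k where k: "k < n" "bullet (C k) > 0" by auto
      have g1: "1 \<le> (\<Sum>j<n. psi N (C j))" using k by (rule Psi_ge1)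
      have "(\<Sum>j<n. psi N (C j)) \<le> (\<Sum>j<n. 2 ^ N)"
        by (intro sum_mono) (auto simp: psi_def)
      then have le: "(\<Sum>j<n. psi N (C j)) \<le> real n * 2 ^ N" by simp
      have "ln (\<Sum>j<n. psi N (C j)) \<le> ln (real n * 2 ^ N)"
        using g1 le by (subst ln_le_cancel_iff) auto
      also have "\<dots> = ln (real n) + real N * ln 2"
        using n0 by (simp add: ln_mult ln_realpow)
      also have "\<dots> \<le> real n + real N"
      proof -
        have "ln (real n) \<le> real n - 1" using n0 by (rule ln_le_minus_one)
        moreover have "ln (2::real) \<le> 1" using ln_le_minus_one[of 2] by simp
        then have "real N * ln 2 \<le> real N" using N1 by (simp add: mult_left_le)
        ultimately show ?thesis by simp
      qed
      finally have "ln (\<Sum>j<n. psi N (C j)) \<le> 2 * real N" using nN by simp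
      then have "2 * real n * (1 + ln (\<Sum>j<n. psi N (C j))) \<le> 2 * real n * (1 + 2 * real N)"
        using n0 by (intro mult_left_mono) auto
      also have "\<dots> \<le> 6 * real n * real N" using n0 N1 by (simp add: algebra_simps)
      moreover have "Phi N n C = 2 * real n * (1 + ln (\<Sum>j<n. psi N (C j)))"
        unfolding Phi_def using False nl by auto
      ultimately show ?thesis by simp
    qed
  qed
qed

lemma arc_basic: "2 \<le> n \<Longrightarrow> i < n \<Longrightarrow> Suc i mod n < n \<and> Suc i mod n \<noteq> i"
proof -
  assume n: "2 \<le> n" and i: "i < n"
  show ?thesis
  proof (cases "Suc i = n")
    case True
    then show ?thesis using n by auto
  next
    case False
    then show ?thesis using i by auto
  qed
qed

lemma noleader_at: "\<not> has_leader n C \<Longrightarrow> k < n \<Longrightarrow> \<not> leader (C k)"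
  by (auto simp: has_leader_def)

lemma arc_lead:
  assumes "2 \<le> n" "i < n" "\<not> has_leader n C" "dnew N (C i) (C (Suc i mod n)) = N"
  shows "has_leader n (interact N n C i)"
proof -
  have b: "Suc i mod n < n" using arc_basic[OF assms(1,2)] by simp
  have "leader (snd (delta N (C i) (C (Suc i mod n))))"
    by (rule delta_lead) (use assms b noleader_at in auto)
  moreover have "interact N n C i (Suc i mod n) = snd (delta N (C i) (C (Suc i mod n)))"
    by (simp add: interact_eq)
  ultimately show ?thesis unfolding has_leader_def using b by metis
qed

lemma psi_step:
  assumes "\<not> leader l" "\<not> leader r" "dnew N l r \<noteq> N"
  shows "psi N (fst (delta N l r)) + psi N (snd (delta N l r)) \<le> psi N r + psi N l / 2"
proof -
  note D = delta_nolead[OF assms]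
  show ?thesis
  proof (cases "0 < bullet l")
    case bl: True
    show ?thesis
    proof (cases "bullet r = 0")
      case True
      then have dn: "dnew N l r = Suc (dist l)" "Suc (dist l) < N"
        using assms(3) by (auto simp: dnew_def min_def split: if_splits)
      have e: "N - dist l = Suc (N - Suc (dist l))" using dn by simp
      show ?thesis using D bl True dn e by (simp add: psi_def)
    next
      case False
      then show ?thesis using D bl by (simp add: psi_def dnew_def)
    qed
  next
    case False
    then show ?thesis using D by (simp add: psi_def dnew_def)
  qed
qed

lemma arc_nb:
  assumes n: "2 \<le> n" and i: "i < n" and nl: "\<not> has_leader n C" and d: "distok N n C"
    and nb: "\<forall>k<n. bullet (C k) = 0"
  shows "Phi N n (interact N n C i) \<le> Phi N n C - (real (dist (C i)) + 1 - real (dist (C (Suc i mod n))))"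
proof -
  define j where "j = Suc i mod n"
  have j: "j < n" "j \<noteq> i" using arc_basic[OF n i] by (auto simp: j_def)
  have PC: "Phi N n C = real n * (real N + 1) - (\<Sum>k<n. real (dist (C k)))"
    using nl nb by (simp add: Phi_def)
  have ll: "\<not> leader (C i)" "\<not> leader (C j)" using nl i j noleader_at by auto
  show ?thesis
  proof (cases "dnew N (C i) (C j) = N")
    case True
    have hl: "has_leader n (interact N n C i)" using arc_lead[OF n i nl] True by (simp add: j_def)
    have "(\<Sum>k\<in>{i,j}. real N + 1 - real (dist (C k))) \<le> (\<Sum>k<n. real N + 1 - real (dist (C k)))"
      by (rule sum_mono2) (use i j d in \<open>auto simp: distok_def\<close>)
    then have "2 * (real N + 1) - real (dist (C i)) - real (dist (C j)) \<le> real n * (real N + 1) - (\<Sum>k<n. real (dist (C k)))"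
      using j by (simp add: sum_subtractf)
    moreover have "real (dist (C i)) \<le> real N" using d i by (simp add: distok_def)
    ultimately show ?thesis using hl PC by (simp add: Phi_def j_def[symmetric])
  next
    case False
    note D = delta_nolead[OF ll False]
    have dn: "dnew N (C i) (C j) = Suc (dist (C i))"
      using False nb j by (auto simp: dnew_def min_def split: if_splits)
    define C' where "C' = interact N n C i"
    have C': "C' = C(i := fst (delta N (C i) (C j)), j := snd (delta N (C i) (C j)))"
      unfolding C'_def interact_eq j_def ..
    have nl': "\<not> has_leader n C'"
      using nl D j unfolding C' has_leader_def by auto
    have nb': "\<forall>k<n. bullet (C' k) = 0"
      using nb D i j unfolding C' by auto
    have "(\<Sum>k<n. real (dist (C' k))) = (\<Sum>k<n. real (dist (C k))) - real (dist (C i)) - real (dist (C j))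
        + real (dist (fst (delta N (C i) (C j)))) + real (dist (snd (delta N (C i) (C j))))"
      unfolding C' by (rule sum_upd2[where g="\<lambda>s. real (dist s)"]) (use i j in auto)
    then have "(\<Sum>k<n. real (dist (C' k))) = (\<Sum>k<n. real (dist (C k))) - real (dist (C j)) + real (dist (C i)) + 1"
      using D dn by simp
    then show ?thesis using nl' nb' PC unfolding C'_def[symmetric] j_def[symmetric]
      by (simp add: Phi_def)
  qed
qed

lemma arc_b:
  assumes n: "2 \<le> n" and i: "i < n" and nl: "\<not> has_leader n C" and d: "distok N n C"
    and hb: "k0 < n" "0 < bullet (C k0)"
  shows "Phi N n (interact N n C i) \<le> Phi N n C - real n * psi N (C i) / (\<Sum>k<n. psi N (C k))"
proof -
  define j where "j = Suc i mod n"
  define P where "P = (\<Sum>k<n. psi N (C k))"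
  have j: "j < n" "j \<noteq> i" using arc_basic[OF n i] by (auto simp: j_def)
  have P1: "1 \<le> P" unfolding P_def using hb by (rule Psi_ge1)
  have PC: "Phi N n C = 2 * real n * (1 + ln P)"
    unfolding Phi_def P_def using nl hb by auto
  have ll: "\<not> leader (C i)" "\<not> leader (C j)" using nl i j noleader_at by auto
  have pl: "psi N (C i) \<le> P"
    unfolding P_def by (rule member_le_sum) (use i psi_nonneg in auto)
  have n0: "0 < real n" using n by simp
  show ?thesis
  proof (cases "dnew N (C i) (C j) = N")
    case True
    have hl: "has_leader n (interact N n C i)" using arc_lead[OF n i nl] True by (simp add: j_def)
    have "psi N (C i) / P \<le> 1" using pl P1 by simp
    then have "real n * psi N (C i) / P \<le> real n" using n0
      by (metis mult_left_le times_divide_eq_right less_imp_le)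
    moreover have "0 \<le> ln P" using P1 by simp
    moreover have "0 \<le> 2 * real n * ln P" using n0 \<open>0 \<le> ln P\<close> by simp
    moreover have "2 * real n * (1 + ln P) = 2 * real n + 2 * real n * ln P" by (simp add: algebra_simps)
    ultimately have "0 \<le> 2 * real n * (1 + ln P) - real n * psi N (C i) / P"
      using n0 by linarith
    then show ?thesis using hl PC by (simp add: Phi_def P_def)
  next
    case False
    note D = delta_nolead[OF ll False]
    define C' where "C' = interact N n C i"
    have C': "C' = C(i := fst (delta N (C i) (C j)), j := snd (delta N (C i) (C j)))"
      unfolding C'_def interact_eq j_def ..
    have nl': "\<not> has_leader n C'"
      using nl D j unfolding C' has_leader_def by auto
    have hb': "\<exists>k<n. 0 < bullet (C' k)"
    proof (cases "0 < bullet (C i) \<or> 0 < bullet (C j)")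
      case True
      then have "0 < bullet (C' j)" using D j unfolding C' by auto
      then show ?thesis using j by blast
    next
      case False
      then have "k0 \<noteq> i" "k0 \<noteq> j" using hb by auto
      then have "0 < bullet (C' k0)" using hb unfolding C' by auto
      then show ?thesis using hb by blast
    qed
    define P' where "P' = (\<Sum>k<n. psi N (C' k))"
    have P'1: "1 \<le> P'" unfolding P'_def using hb' Psi_ge1 by blast
    have "P' = P - psi N (C i) - psi N (C j)
        + psi N (fst (delta N (C i) (C j))) + psi N (snd (delta N (C i) (C j)))"
      unfolding P'_def P_def C' by (rule sum_upd2) (use i j in auto)
    then have P'le: "P' \<le> P - psi N (C i) / 2"
      using psi_step[OF ll False] by simp
    have "ln P' - ln P = ln (P' / P)" using P1 P'1 by (simp add: ln_div)
    also have "\<dots> \<le> P' / P - 1" using P1 P'1 by (intro ln_le_minus_one) simp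
    also have "\<dots> \<le> (P - psi N (C i) / 2) / P - 1"
      using P'le P1 by (simp add: divide_right_mono)
    also have "\<dots> = - (psi N (C i) / (2 * P))" using P1 by (simp add: field_simps)
    finally have lnle: "ln P' \<le> ln P - psi N (C i) / (2 * P)" by simp
    have PC': "Phi N n C' = 2 * real n * (1 + ln P')"
      unfolding Phi_def P'_def using nl' hb' by auto
    have "2 * real n * (1 + ln P') \<le> 2 * real n * (1 + (ln P - psi N (C i) / (2 * P)))"
      using lnle n0 by (intro mult_left_mono) auto
    also have "\<dots> = 2 * real n * (1 + ln P) - real n * psi N (C i) / P"
      using P1 by (simp add: field_simps)
    finally show ?thesis using PC PC' unfolding C'_def P_def by simp
  qed
qed

lemma drift:
  assumes n: "n \<ge> 2" and d: "distok N n C" and nl: "\<not> has_leader n C"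
  shows "1 + (\<Sum>i<n. Phi N n (interact N n C i)) / real n \<le> Phi N n C"
proof -
  have n0: "0 < real n" using n by simp
  have "(\<Sum>i<n. Phi N n (interact N n C i)) \<le> real n * Phi N n C - real n"
  proof (cases "\<forall>k<n. bullet (C k) = 0")
    case True
    have "(\<Sum>i<n. Phi N n (interact N n C i))
       \<le> (\<Sum>i<n. Phi N n C - (real (dist (C i)) + 1 - real (dist (C (Suc i mod n)))))"
      by (intro sum_mono arc_nb[OF n _ nl d True]) simp
    also have "\<dots> = real n * Phi N n C - ((\<Sum>i<n. real (dist (C i))) + real n - (\<Sum>i<n. real (dist (C (Suc i mod n)))))"
      by (simp add: sum_subtractf sum.distrib)
    also have "(\<Sum>i<n. real (dist (C (Suc i mod n)))) = (\<Sum>i<n. real (dist (C i)))"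
      using sum_rot[of n "\<lambda>i. real (dist (C i))"] n by simp
    finally show ?thesis by simp
  next
    case False
    then obtain k0 where hb: "k0 < n" "0 < bullet (C k0)" by auto
    define P where "P = (\<Sum>k<n. psi N (C k))"
    have P1: "1 \<le> P" unfolding P_def using hb by (rule Psi_ge1)
    have "(\<Sum>i<n. Phi N n (interact N n C i)) \<le> (\<Sum>i<n. Phi N n C - real n * psi N (C i) / P)"
      unfolding P_def by (intro sum_mono arc_b[OF n _ nl d hb]) simp
    also have "\<dots> = real n * Phi N n C - real n * (\<Sum>i<n. psi N (C i)) / P"
      by (simp add: sum_subtractf sum_divide_distrib[symmetric] sum_distrib_left[symmetric])
    also have "\<dots> = real n * Phi N n C - real n"
      using P1 unfolding P_def by simp
    finally show ?thesis .
  qed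
  then have "(\<Sum>i<n. Phi N n (interact N n C i)) / real n \<le> Phi N n C - 1"
    using n0 by (simp add: field_simps)
  then show ?thesis by simp
qed

lemma hk_bound:
  assumes n: "n \<ge> 2"
  shows "distok N n C \<Longrightarrow> (\<integral>\<^sup>+\<omega>. hk N n k C \<omega> \<partial>scheduler n) \<le> ennreal (Phi N n C)"
proof (induction k arbitrary: C)
  case 0
  then show ?case by simp
next
  case (Suc k)
  show ?case
  proof (cases "has_leader n C")
    case True
    then show ?thesis using n by (simp add: hk_int_Suc)
  next
    case False
    have "(\<Sum>i<n. (\<integral>\<^sup>+\<omega>. hk N n k (interact N n C i) \<omega> \<partial>scheduler n) * ennreal (1 / real n))
        \<le> (\<Sum>i<n. ennreal (Phi N n (interact N n C i)) * ennreal (1 / real n))"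
      by (intro sum_mono mult_right_mono Suc.IH distok_interact[OF Suc.prems]) auto
    also have "\<dots> = (\<Sum>i<n. ennreal (Phi N n (interact N n C i) / real n))"
      by (intro sum.cong refl) (simp add: ennreal_mult[symmetric] Phi_nonneg distok_interact[OF Suc.prems])
    also have "\<dots> = ennreal (\<Sum>i<n. Phi N n (interact N n C i) / real n)"
      by (rule sum_ennreal) (auto intro!: divide_nonneg_nonneg Phi_nonneg distok_interact[OF Suc.prems])
    also have "\<dots> = ennreal ((\<Sum>i<n. Phi N n (interact N n C i)) / real n)"
      by (simp add: sum_divide_distrib)
    finally have "1 + (\<Sum>i<n. (\<integral>\<^sup>+\<omega>. hk N n k (interact N n C i) \<omega> \<partial>scheduler n) * ennreal (1 / real n))
       \<le> ennreal (1 + (\<Sum>i<n. Phi N n (interact N n C i)) / real n)"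
      by (subst ennreal_plus) (auto intro!: add_left_mono divide_nonneg_nonneg sum_nonneg Phi_nonneg distok_interact[OF Suc.prems])
    also have "\<dots> \<le> ennreal (Phi N n C)"
      using drift[OF n Suc.prems False] by (rule ennreal_leI)
    finally show ?thesis using False n by (subst hk_int_Suc) auto
  qed
qed

theorem lemma10:
  shows "\<exists>c::real. c > 0 \<and>
    (\<forall>N n (C::config).
       2 \<le> n \<longrightarrow> n \<le> N \<longrightarrow>
       (\<forall>i<n. valid_state N (C i)) \<longrightarrow>
       \<not> has_leader n C \<longrightarrow>
       expected_hit_time N n C \<le> ennreal (c * real n * real N))"
proof (intro exI[of _ 6] conjI allI impI)
  fix N n C
  assume n: "2 \<le> n" and nN: "n \<le> N" and v: "\<forall>i<n. valid_state N (C i)" and "\<not> has_leader n C"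
  have dk: "distok N n C" using v by (simp add: distok_def valid_state_def)
  have "expected_hit_time N n C = (\<integral>\<^sup>+\<omega>. (SUP k. hk N n k C \<omega>) \<partial>scheduler n)"
    unfolding expected_hit_time_def hk_SUP ..
  also have "\<dots> = (SUP k. (\<integral>\<^sup>+\<omega>. hk N n k C \<omega> \<partial>scheduler n))"
    unfolding scheduler_def
    by (rule nn_integral_monotone_convergence_SUP) (auto intro: hk_meas incseq_SucI le_funI hk_mono)
  also have "\<dots> \<le> ennreal (Phi N n C)"
    by (rule SUP_least) (rule hk_bound[OF n dk])
  also have "\<dots> \<le> ennreal (6 * real n * real N)"
    by (rule ennreal_leI) (rule Phi_bound[OF n nN dk])
  finally show "expected_hit_time N n C \<le> ennreal (6 * real n * real N)" .
qed simp

end
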